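(* Let $\mathcal{D}$ be a finite dataset, $\mathbb{P}_{\mathcal{D}}$ a full-support probability distribution on $\mathcal{D}$, $\alpha\in(0,1)$ with $\mathcal{S}_\alpha\neq\varnothing$, and $\mathrm{Learn}$ any (possibly randomized) learning algorithm. Let $\mathrm{Retrain}$ be the retraining unlearning method, i.e. $\mathrm{Retrain}(\mathrm{Learn}(\mathcal{R}\cup\mathcal{F}),\mathcal{F})=\mathrm{Learn}(\mathcal{R})$. Then for every (not necessarily efficient) adversary $\mathcal{A}$, $$\mathrm{Adv}(\mathcal{A},\mathrm{Retrain})=0 .$$ Consequently $\mathcal{Q}(\mathrm{Retrain})=1$.
   Context: Unlearning sample inference game. $\mathcal{D}$ is a finite dataset with a "sensitivity distribution" $\mathbb{P}_{\mathcal{D}}$ on $\mathcal{D}$ (assumed to have full support), and $\alpha\in(0,1)$ is the unlearning portion. $\mathcal{S}_\alpha$ is the (finite) set of all ordered triples $s=(\mathcal{R},\mathcal{F},\mathcal{T})$ of pairwise disjoint subsets of $\mathcal{D}$ with $\mathcal{R}\cup\mathcal{F}\cup\mathcal{T}=\mathcal{D}$, $|\mathcal{F}|/|\mathcal{R}\cup\mathcal{F}|=\alpha$ and $|\mathcal{F}|=|\mathcal{T}|$ (retain, forget, test sets). For $s\in\mathcal{S}_\alpha$ and a bit $b\in\{0,1\}$, the random oracle $\mathcal{O}_s(b)$, each time it is queried, returns an independent sample from $\mathbb{P}_{\mathcal{D}}$ conditioned on $\mathcal{F}$ if $b=0$, and conditioned on $\mathcal{T}$ if $b=1$. A learning algorithm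 $\mathrm{Learn}$ is a randomized map from datasets to models; an unlearning algorithm $\mathrm{Unlearn}$ is a randomized map taking a model and a subset of data and returning a model. For $s=(\mathcal{R},\mathcal{F},\mathcal{T})$, $\mathbb{P}_{\mathcal{M}}(\mathrm{Unlearn},s)$ denotes the distribution of $m=\mathrm{Unlearn}(\mathrm{Learn}(\mathcal{R}\cup\mathcal{F}),\mathcal{F})$. An adversary $\mathcal{A}$ is a (possibly randomized) algorithm that is given access to a model $m$ and to an oracle $\mathcal{O}$ (which it may query repeatedly; $b$ and $s$ are unknown to it) and outputs a bit $\mathcal{A}^{\mathcal{O}}(m)\in\{0,1\}$; the oracle is independent of $m$ given $s$. The advantage is $$\mathrm{Adv}(\mathcal{A},\mathrm{Unlearn})=\frac{1}{|\mathcal{S}_\alpha|}\Big|\sum_{s\in\mathcal{S}_\alpha}\Pr_{m\sim\mathbb{P}_{\mathcal{M}}(\mathrm{Unlearn},s),\,\mathcal{O}=\mathcal{O}_s(0)}(\mathcal{A}^{\mathcal{O}}(m)=1)-\sum_{s\in\mathcal{S}_\alpha}\Pr_{m\sim\mathbb{P}_{\mathcal{M}}(\mathrm{Unlearn},s),\,\mathcal{O}=\mathcal{O}_s(1)}(\mathcal{A}^{\mathcal{O}}(m)=1)\Big|,$$ and the Unlearning Quality is $\mathcal{Q}(\mathrm{Unlearn})=1-\sup_{\mathcal{A}}\mathrm{Adv}(\mathcal{A},\mathrm{Unlearn})$, the supremum over adversaries. *)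

theory Defs
  imports "HOL-Probability.Probability"
begin

definition S_alpha :: "'a set \<Rightarrow> real \<Rightarrow> ('a set \<times> 'a set \<times> 'a set) set" where
  "S_alpha D \<alpha> = {(R, F, T). R \<subseteq> D \<and> F \<subseteq> D \<and> T \<subseteq> D \<and>
      R \<inter> F = {} \<and> R \<inter> T = {} \<and> F \<inter> T = {} \<and> R \<union> F \<union> T = D \<and>
      real (card F) / real (card (R \<union> F)) = \<alpha> \<and> card F = card T}"

(* Oracle O_s(b): the whole (infinite) sequence of its independent answers,
  each distributed as P conditioned on F (b = False, i.e. bit 0) or on T (b = True, bit 1). *)
definition orcl :: "'a pmf \<Rightarrow> ('a set \<times> 'a set \<times> 'a set) \<Rightarrow> bool \<Rightarrow> 'a stream measure" where
  "orcl P s b = (case s of (R, F, T) \<Rightarrow>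
      stream_space (measure_pmf (cond_pmf P (if b then T else F))))"

definition model_dist :: "('a set \<Rightarrow> 'm pmf) \<Rightarrow> ('m \<Rightarrow> 'a set \<Rightarrow> 'm pmf)
    \<Rightarrow> ('a set \<times> 'a set \<times> 'a set) \<Rightarrow> 'm pmf" where
  "model_dist Learn Unlearn s = (case s of (R, F, T) \<Rightarrow>
      bind_pmf (Learn (R \<union> F)) (\<lambda>m. Unlearn m F))"

(* An adversary gets the model and the sequence of orcl answers (it may read any
  prefix, adaptively) and outputs a random bit; it uses its own independent coins. *)
definition is_adversary :: "('m \<Rightarrow> 'a stream \<Rightarrow> bool pmf) \<Rightarrow> bool" where
  "is_adversary A \<longleftrightarrow>
     (\<forall>m. (\<lambda>\<omega>. pmf (A m \<omega>) True) \<in> borel_measurable (stream_space (count_space UNIV)))"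

definition prob_one :: "'a pmf \<Rightarrow> (('a set \<times> 'a set \<times> 'a set) \<Rightarrow> 'm pmf)
    \<Rightarrow> ('m \<Rightarrow> 'a stream \<Rightarrow> bool pmf) \<Rightarrow> ('a set \<times> 'a set \<times> 'a set) \<Rightarrow> bool \<Rightarrow> real" where
  "prob_one P PM A s b =
     measure_pmf.expectation (PM s) (\<lambda>m. integral\<^sup>L (orcl P s b) (\<lambda>\<omega>. pmf (A m \<omega>) True))"

definition adv :: "'a set \<Rightarrow> real \<Rightarrow> 'a pmf \<Rightarrow> (('a set \<times> 'a set \<times> 'a set) \<Rightarrow> 'm pmf)
    \<Rightarrow> ('m \<Rightarrow> 'a stream \<Rightarrow> bool pmf) \<Rightarrow> real" where
  "adv D \<alpha> P PM A = 1 / real (card (S_alpha D \<alpha>)) *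
     \<bar>(\<Sum>s\<in>S_alpha D \<alpha>. prob_one P PM A s False) - (\<Sum>s\<in>S_alpha D \<alpha>. prob_one P PM A s True)\<bar>"

definition quality :: "'a set \<Rightarrow> real \<Rightarrow> 'a pmf \<Rightarrow> (('a set \<times> 'a set \<times> 'a set) \<Rightarrow> 'm pmf) \<Rightarrow> real" where
  "quality D \<alpha> P PM = 1 - (SUP A \<in> {A :: 'm \<Rightarrow> 'a stream \<Rightarrow> bool pmf. is_adversary A}. adv D \<alpha> P PM A)"

end

theory Submission
  imports Defs
begin

lemma swap_mem:
  assumes fin: "finite D" and s: "(R, F, T) \<in> S_alpha D \<alpha>"
  shows "(R, T, F) \<in> S_alpha D \<alpha>"
proof -
  from s have h: "R \<subseteq> D" "F \<subseteq> D" "T \<subseteq> D" "R \<inter> F = {}" "R \<inter> T = {}" "F \<inter> T = {}"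
    "R \<union> F \<union> T = D" "real (card F) / real (card (R \<union> F)) = \<alpha>" "card F = card T"
    by (auto simp: S_alpha_def)
  have fR: "finite R" "finite F" "finite T" using h fin finite_subset by auto
  have "card (R \<union> F) = card R + card F" using fR h by (simp add: card_Un_disjoint)
  moreover have "card (R \<union> T) = card R + card T" using fR h by (simp add: card_Un_disjoint)
  ultimately have "card (R \<union> T) = card (R \<union> F)" using h by simp
  then show ?thesis using h by (auto simp: S_alpha_def)
qed

definition swp :: "'a set \<times> 'a set \<times> 'a set \<Rightarrow> 'a set \<times> 'a set \<times> 'a set" where
  "swp s = (case s of (R, F, T) \<Rightarrow> (R, T, F))"

theorem theorem3p4:
  fixes D :: "'a set" and P :: "'a pmf" and \<alpha> :: real
    and Learn :: "'a set \<Rightarrow> 'm pmf" and Unlearn :: "'m \<Rightarrow> 'a set \<Rightarrow> 'm pmf"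
  assumes "finite D"
    and "set_pmf P = D"
    and "0 < \<alpha>" and "\<alpha> < 1"
    and "S_alpha D \<alpha> \<noteq> {}"
    and retrain: "\<And>R F T. (R, F, T) \<in> S_alpha D \<alpha> \<Longrightarrow>
                    bind_pmf (Learn (R \<union> F)) (\<lambda>m. Unlearn m F) = Learn R"
  shows "(\<forall>A. is_adversary A \<longrightarrow> adv D \<alpha> P (model_dist Learn Unlearn) A = 0)
         \<and> quality D \<alpha> P (model_dist Learn Unlearn) = 1"
proof -
  let ?S = "S_alpha D \<alpha>"
  have bij: "bij_betw swp ?S ?S"
  proof (rule bij_betw_byWitness[where f'=swp])
    show "\<forall>a\<in>?S. swp (swp a) = a" by (auto simp: swp_def)
    show "\<forall>a\<in>?S. swp (swp a) = a" by (auto simp: swp_def)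
    show "swp ` ?S \<subseteq> ?S" using swap_mem[OF assms(1)] by (auto simp: swp_def)
    show "swp ` ?S \<subseteq> ?S" using swap_mem[OF assms(1)] by (auto simp: swp_def)
  qed
  have adv0: "adv D \<alpha> P (model_dist Learn Unlearn) A = 0" for A
  proof -
    let ?p = "prob_one P (model_dist Learn Unlearn) A"
    have eq: "?p (swp s) False = ?p s True" if "s \<in> ?S" for s
    proof -
      obtain R F T where s: "s = (R, F, T)" by (cases s) auto
      have m1: "model_dist Learn Unlearn (R, F, T) = Learn R"
        using retrain that s by (simp add: model_dist_def)
      have m2: "model_dist Learn Unlearn (R, T, F) = Learn R"
      proof -
        have "(R, T, F) \<in> ?S" using swap_mem[OF assms(1)] that s by blast
        then show ?thesis using retrain by (simp add: model_dist_def)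
      qed
      show ?thesis using m1 m2 s by (simp add: swp_def prob_one_def orcl_def)
    qed
    have "(\<Sum>s\<in>?S. ?p s False) = (\<Sum>s\<in>?S. ?p (swp s) False)"
      using sum.reindex_bij_betw[OF bij, of "\<lambda>s. ?p s False"] by simp
    also have "\<dots> = (\<Sum>s\<in>?S. ?p s True)" using eq by (rule sum.cong[OF refl])
    finally show ?thesis by (simp add: adv_def)
  qed
  have ex: "is_adversary (\<lambda>m \<omega>. return_pmf True)" by (simp add: is_adversary_def)
  have "(\<lambda>A. adv D \<alpha> P (model_dist Learn Unlearn) A) ` {A. is_adversary A} = {0}"
    using adv0 ex by (auto intro!: image_eqI[where x="\<lambda>m \<omega>. return_pmf True"])
  then show ?thesis using adv0 by (simp add: quality_def)
qed

end
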